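(* Let $k\ge1$ and let $A_1,\dots,A_n$ be independent events with probabilities $1\ge u_1\ge u_2\ge\dots\ge u_n\ge0$. Then \[ \mathbf{P}\big(\{A_i\}_{i=1}^n\text{ has no }k\text{-gaps}\big)\;\le\;\prod_{i=1}^{n-k+1}f_k(1-u_i), \] an empty product being $1$.
   Context: For an integer $k\ge1$, $f_k:[0,1]\to[0,1]$ denotes the unique decreasing function satisfying $f_k(x)^k-f_k(x)^{k+1}=x^k-x^{k+1}$ for all $x\in[0,1]$; it is continuous with $f_k(0)=1$, $f_k(1)=0$. A sequence of events $A_1,\dots,A_n$ has a $k$-gap if there is an index $i$ with $i+k-1\le n$ such that none of $A_i,\dots,A_{i+k-1}$ occurs. *)

theory Defs
  imports "HOL-Probability.Probability"
begin

definition fk_spec :: "nat \<Rightarrow> (real \<Rightarrow> real) \<Rightarrow> bool" where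
  "fk_spec k f \<longleftrightarrow>
     (\<forall>x\<in>{0..1}. f x \<in> {0..1} \<and> f x ^ k - f x ^ (k+1) = x ^ k - x ^ (k+1)) \<and>
     (\<forall>x\<in>{0..1}. \<forall>y\<in>{0..1}. x \<le> y \<longrightarrow> f y \<le> f x)"

definition f_k :: "nat \<Rightarrow> real \<Rightarrow> real" where
  "f_k k x = (THE y. \<exists>f. fk_spec k f \<and> f x = y)"

definition has_k_gap :: "nat \<Rightarrow> nat \<Rightarrow> (nat \<Rightarrow> 'a set) \<Rightarrow> 'a \<Rightarrow> bool" where
  "has_k_gap k n A \<omega> \<longleftrightarrow>
     (\<exists>i. 1 \<le> i \<and> i + k - 1 \<le> n \<and> (\<forall>j\<in>{i..i+k-1}. \<omega> \<notin> A j))"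

end

theory Submission
  imports Defs
begin


definition gg :: "nat \<Rightarrow> real \<Rightarrow> real" where "gg k y = y^k - y^(Suc k)"
definition cc :: "nat \<Rightarrow> real" where "cc k = real k / real (Suc k)"

lemma gg_deriv:
  assumes "k \<ge> 1"
  shows "DERIV (gg k) y :> y^(k-1) * (real k - real (Suc k) * y)"
proof -
  obtain m where k: "k = Suc m" using assms by (cases k) auto
  have "DERIV (\<lambda>y. y^Suc m - y^(Suc (Suc m))) y :> real (Suc m) * y^m - real (Suc (Suc m)) * y^(Suc m)"
    using DERIV_diff[OF DERIV_pow[of "Suc m" y] DERIV_pow[of "Suc (Suc m)" y]] by simp
  then show ?thesis unfolding gg_def k by (simp add: algebra_simps)
qed

lemma gg_cont: "continuous_on S (gg k)"
  unfolding gg_def by (intro continuous_intros)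

lemma gg_isCont: "isCont (gg k) y"
proof -
  have "gg k = (\<lambda>y. y^k - y^(Suc k))" by (rule ext) (simp add: gg_def)
  then show ?thesis by (simp add: continuous_intros)
qed

lemma cc_bounds: "k \<ge> 1 \<Longrightarrow> 0 < cc k \<and> cc k < 1"
  unfolding cc_def by (auto simp: field_simps)

lemma gg_strict_inc:
  assumes "k \<ge> 1" "0 \<le> a" "a < b" "b \<le> cc k"
  shows "gg k a < gg k b"
proof (rule DERIV_pos_imp_increasing_open[OF assms(3)])
  fix x assume x: "a < x" "x < b"
  have "x * real (Suc k) < b * real (Suc k)" using x by (intro mult_strict_right_mono) auto
  also have "\<dots> \<le> real k" using assms(4) unfolding cc_def by (simp add: field_simps)
  finally have "real k - real (Suc k) * x > 0" by (simp add: algebra_simps)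
  moreover have "x^(k-1) > 0" using x assms(2) by simp
  ultimately have "x^(k-1) * (real k - real (Suc k) * x) > 0" by simp
  then show "\<exists>y. DERIV (gg k) x :> y \<and> y > 0"
    using gg_deriv[OF assms(1), of x] by blast
qed (rule gg_cont)

lemma gg_strict_dec:
  assumes "k \<ge> 1" "cc k \<le> a" "a < b" "b \<le> 1"
  shows "gg k a > gg k b"
proof (rule DERIV_neg_imp_decreasing_open[OF assms(3)])
  fix x assume x: "a < x" "x < b"
  have "real k \<le> a * real (Suc k)" using assms(2) unfolding cc_def by (simp add: field_simps)
  also have "a * real (Suc k) < x * real (Suc k)" using x by (intro mult_strict_right_mono) auto
  finally have "real k - real (Suc k) * x < 0" by (simp add: algebra_simps)
  moreover have "x^(k-1) > 0" using x assms(2) cc_bounds[OF assms(1)] by simp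
  ultimately have "x^(k-1) * (real k - real (Suc k) * x) < 0" by (simp add: mult_pos_neg)
  then show "\<exists>y. DERIV (gg k) x :> y \<and> y < 0"
    using gg_deriv[OF assms(1), of x] by blast
qed (rule gg_cont)

lemma gg_inc: "k \<ge> 1 \<Longrightarrow> 0 \<le> a \<Longrightarrow> a \<le> b \<Longrightarrow> b \<le> cc k \<Longrightarrow> gg k a \<le> gg k b"
  using gg_strict_inc[of k a b] by (cases "a = b") auto

lemma gg_dec: "k \<ge> 1 \<Longrightarrow> cc k \<le> a \<Longrightarrow> a \<le> b \<Longrightarrow> b \<le> 1 \<Longrightarrow> gg k b \<le> gg k a"
  using gg_strict_dec[of k a b] by (cases "a = b") auto

lemma gg_0: "k \<ge> 1 \<Longrightarrow> gg k 0 = 0" "gg k 1 = 0" by (auto simp: gg_def)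

lemma gg_max: "k \<ge> 1 \<Longrightarrow> 0 \<le> y \<Longrightarrow> y \<le> 1 \<Longrightarrow> gg k y \<le> gg k (cc k)"
  using gg_inc[of k y "cc k"] gg_dec[of k "cc k" y] cc_bounds[of k] by (cases "y \<le> cc k") auto

lemma gg_nonneg: "0 \<le> y \<Longrightarrow> y \<le> 1 \<Longrightarrow> 0 \<le> gg k y"
proof -
  assume "0 \<le> y" "y \<le> 1"
  then have "0 \<le> y^k * (1 - y)" by simp
  then show ?thesis by (simp add: gg_def algebra_simps)
qed

lemma uniq_dec:
  assumes k: "k \<ge> 1" and a: "a \<in> {cc k..1}" and b: "b \<in> {cc k..1}" and e: "gg k a = gg k b"
  shows "a = b"
proof -
  have "\<not> a < b" using gg_strict_dec[OF k, of a b] a b e by auto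
  moreover have "\<not> b < a" using gg_strict_dec[OF k, of b a] a b e by auto
  ultimately show ?thesis by linarith
qed

lemma uniq_inc:
  assumes k: "k \<ge> 1" and a: "a \<in> {0..cc k}" and b: "b \<in> {0..cc k}" and e: "gg k a = gg k b"
  shows "a = b"
proof -
  have "\<not> a < b" using gg_strict_inc[OF k, of a b] a b e by auto
  moreover have "\<not> b < a" using gg_strict_inc[OF k, of b a] a b e by auto
  ultimately show ?thesis by linarith
qed

definition myf :: "nat \<Rightarrow> real \<Rightarrow> real" where
  "myf k x = (if x \<le> cc k then (THE y. y \<in> {cc k..1} \<and> gg k y = gg k x)
              else (THE y. y \<in> {0..cc k} \<and> gg k y = gg k x))"

lemma myf_lo:
  assumes "k \<ge> 1" "0 \<le> x" "x \<le> cc k"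
  shows "myf k x \<in> {cc k..1} \<and> gg k (myf k x) = gg k x"
proof -
  have cb: "0 < cc k" "cc k < 1" using cc_bounds[OF assms(1)] by auto
  have "\<exists>y. cc k \<le> y \<and> y \<le> 1 \<and> gg k y = gg k x"
  proof (rule IVT2)
    show "gg k 1 \<le> gg k x" using gg_0[of k] gg_nonneg[of x k] assms cb by auto
    show "gg k x \<le> gg k (cc k)" using gg_inc[of k x "cc k"] assms by auto
    show "cc k \<le> 1" using cb by auto
    show "\<forall>y. cc k \<le> y \<and> y \<le> 1 \<longrightarrow> isCont (gg k) y" using gg_isCont by blast
  qed
  then obtain y where y: "y \<in> {cc k..1}" "gg k y = gg k x" by auto
  have uniq: "z = y" if "z \<in> {cc k..1}" "gg k z = gg k x" for z
    using uniq_dec[OF assms(1), of z y] that y by simp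
  have "(THE y. y \<in> {cc k..1} \<and> gg k y = gg k x) = y"
  proof (rule the_equality)
    show "y \<in> {cc k..1} \<and> gg k y = gg k x" using y by simp
  qed (use uniq in blast)
  then show ?thesis using y assms by (simp add: myf_def)
qed

lemma myf_hi:
  assumes "k \<ge> 1" "cc k < x" "x \<le> 1"
  shows "myf k x \<in> {0..cc k} \<and> gg k (myf k x) = gg k x"
proof -
  have cb: "0 < cc k" "cc k < 1" using cc_bounds[OF assms(1)] by auto
  have "\<exists>y. 0 \<le> y \<and> y \<le> cc k \<and> gg k y = gg k x"
  proof (rule IVT)
    show "gg k 0 \<le> gg k x" using gg_0[of k] gg_nonneg[of x k] assms cb by auto
    show "gg k x \<le> gg k (cc k)" using gg_dec[of k "cc k" x] assms by auto
    show "0 \<le> cc k" using cb by auto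
    show "\<forall>y. 0 \<le> y \<and> y \<le> cc k \<longrightarrow> isCont (gg k) y" using gg_isCont by blast
  qed
  then obtain y where y: "y \<in> {0..cc k}" "gg k y = gg k x" by auto
  have uniq: "z = y" if "z \<in> {0..cc k}" "gg k z = gg k x" for z
    using uniq_inc[OF assms(1), of z y] that y by simp
  have "(THE y. y \<in> {0..cc k} \<and> gg k y = gg k x) = y"
  proof (rule the_equality)
    show "y \<in> {0..cc k} \<and> gg k y = gg k x" using y by simp
  qed (use uniq in blast)
  then show ?thesis using y assms by (simp add: myf_def)
qed



lemma gg_eq_iff: "gg k a = gg k b \<longleftrightarrow> a^k - a^(k+1) = b^k - b^(k+1)"
  by (simp add: gg_def)

lemma myf_spec: assumes k: "k \<ge> 1" shows "fk_spec k (myf k)"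
proof -
  have cb: "0 < cc k" "cc k < 1" using cc_bounds[OF k] by auto
  have A: "myf k x \<in> {0..1} \<and> gg k (myf k x) = gg k x" if "x \<in> {0..1}" for x
    using myf_lo[OF k, of x] myf_hi[OF k, of x] that cb by (cases "x \<le> cc k") auto
  have B: "myf k y \<le> myf k x" if xy: "x \<in> {0..1}" "y \<in> {0..1}" "x \<le> y" for x y
  proof (cases "y \<le> cc k")
    case True
    then have lx: "myf k x \<in> {cc k..1}" "gg k (myf k x) = gg k x"
      and ly: "myf k y \<in> {cc k..1}" "gg k (myf k y) = gg k y"
      using myf_lo[OF k, of x] myf_lo[OF k, of y] xy by auto
    have "gg k x \<le> gg k y" using gg_inc[OF k, of x y] xy True by auto
    then show ?thesis using gg_strict_dec[OF k, of "myf k x" "myf k y"] lx ly by force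
  next
    case False
    show ?thesis
    proof (cases "x \<le> cc k")
      case True
      then show ?thesis using myf_lo[OF k, of x] myf_hi[OF k, of y] xy False by auto
    next
      case F2: False
      then have lx: "myf k x \<in> {0..cc k}" "gg k (myf k x) = gg k x"
        and ly: "myf k y \<in> {0..cc k}" "gg k (myf k y) = gg k y"
        using myf_hi[OF k, of x] myf_hi[OF k, of y] xy False by auto
      have "gg k y \<le> gg k x" using gg_dec[OF k, of x y] xy F2 by auto
      then show ?thesis using gg_strict_inc[OF k, of "myf k x" "myf k y"] lx ly by force
    qed
  qed
  show ?thesis unfolding fk_spec_def using A B by (auto simp: gg_eq_iff)
qed

lemma spec_unique:
  assumes k: "k \<ge> 1" and f: "fk_spec k f" and x: "x \<in> {0..1}"
  shows "f x = myf k x"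
proof -
  have cb: "0 < cc k" "cc k < 1" using cc_bounds[OF k] by auto
  have f1: "f y \<in> {0..1}" "gg k (f y) = gg k y" if "y \<in> {0..1}" for y
    using f that unfolding fk_spec_def by (auto simp: gg_eq_iff)
  have f2: "f y \<le> f z" if "z \<in> {0..1}" "y \<in> {0..1}" "z \<le> y" for y z
    using f that unfolding fk_spec_def by auto
  have fc: "f (cc k) = cc k"
  proof -
    have h: "f (cc k) \<in> {0..1}" "gg k (f (cc k)) = gg k (cc k)" using f1[of "cc k"] cb by auto
    show ?thesis
    proof (cases "f (cc k) \<le> cc k")
      case True then show ?thesis using uniq_inc[OF k, of "f (cc k)" "cc k"] h cb by auto
    next
      case False then show ?thesis using uniq_dec[OF k, of "f (cc k)" "cc k"] h cb by auto
    qed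
  qed
  show ?thesis
  proof (cases "x \<le> cc k")
    case True
    have "f x \<ge> cc k" using f2[where y="cc k" and z=x] fc True x cb by auto
    then have h: "f x \<in> {cc k..1}" "gg k (f x) = gg k x" using f1[OF x] by auto
    have m: "myf k x \<in> {cc k..1}" "gg k (myf k x) = gg k x" using myf_lo[OF k, of x] True x by auto
    show ?thesis
      using uniq_dec[OF k, of "f x" "myf k x"] h m by simp
  next
    case False
    have "f x \<le> cc k" using f2[where y=x and z="cc k"] fc False x cb by auto
    then have h: "f x \<in> {0..cc k}" "gg k (f x) = gg k x" using f1[OF x] by auto
    have m: "myf k x \<in> {0..cc k}" "gg k (myf k x) = gg k x" using myf_hi[OF k, of x] False x by auto
    show ?thesis
      using uniq_inc[OF k, of "f x" "myf k x"] h m by simp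
  qed
qed

lemma fk_eq_myf: assumes k: "k \<ge> 1" and x: "x \<in> {0..1}" shows "f_k k x = myf k x"
  unfolding f_k_def
proof (rule the_equality)
  show "\<exists>f. fk_spec k f \<and> f x = myf k x" using myf_spec[OF k] by blast
next
  fix y assume "\<exists>f. fk_spec k f \<and> f x = y"
  then show "y = myf k x" using spec_unique[OF k _ x] by blast
qed

lemma fk_range: "k \<ge> 1 \<Longrightarrow> x \<in> {0..1} \<Longrightarrow> f_k k x \<in> {0..1}"
  using myf_spec[of k] fk_eq_myf[of k x] unfolding fk_spec_def by auto

lemma fk_rel: "k \<ge> 1 \<Longrightarrow> x \<in> {0..1} \<Longrightarrow> f_k k x ^ k - f_k k x ^ (k+1) = x^k - x^(k+1)"
  using myf_spec[of k] fk_eq_myf[of k x] unfolding fk_spec_def by auto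

lemma fk_anti: "k \<ge> 1 \<Longrightarrow> x \<in> {0..1} \<Longrightarrow> y \<in> {0..1} \<Longrightarrow> x \<le> y \<Longrightarrow> f_k k y \<le> f_k k x"
  using myf_spec[of k] fk_eq_myf[of k x] fk_eq_myf[of k y] unfolding fk_spec_def by auto

lemma fk_lo: "k \<ge> 1 \<Longrightarrow> 0 \<le> x \<Longrightarrow> x \<le> cc k \<Longrightarrow> cc k \<le> f_k k x"
  using myf_lo[of k x] fk_eq_myf[of k x] cc_bounds[of k] by auto

lemma fk_fix: "k \<ge> 1 \<Longrightarrow> x \<in> {0..1} \<Longrightarrow> f_k k x = x \<Longrightarrow> x = cc k"
  using myf_lo[of k x] myf_hi[of k x] fk_eq_myf[of k x] cc_bounds[of k]
  by (cases "x \<le> cc k") auto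



definition NN :: "nat \<Rightarrow> real \<Rightarrow> nat \<Rightarrow> real" where
  "NN k x m = (\<Sum>i<m. x^i * f_k k x ^ (k - Suc i))"

definition wt :: "nat \<Rightarrow> real \<Rightarrow> nat \<Rightarrow> real" where
  "wt k x t = NN k x (k - t) / NN k x k"

lemma NN_nonneg: "k \<ge> 1 \<Longrightarrow> x \<in> {0..1} \<Longrightarrow> 0 \<le> NN k x m"
  unfolding NN_def using fk_range[of k x] by (intro sum_nonneg) auto

lemma NN_pos: assumes k: "k \<ge> 1" and x: "x \<in> {0..1}" shows "0 < NN k x k"
proof -
  have F: "f_k k x \<in> {0..1}" using fk_range[OF k x] .
  have cb: "0 < cc k" "cc k < 1" using cc_bounds[OF k] by auto
  have le: "x^i * f_k k x ^ (k - Suc i) \<le> NN k x k" if "i < k" for i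
    unfolding NN_def using that F x by (intro member_le_sum) auto
  show ?thesis
  proof (cases "x > 0")
    case True
    have "0 < x^(k-1) * f_k k x ^ (k - Suc (k-1))" using True k by simp
    then show ?thesis using le[of "k-1"] k by linarith
  next
    case False
    then have "x = 0" using x by auto
    then have "cc k \<le> f_k k x" using fk_lo[OF k, of x] cb by auto
    then have "0 < x^0 * f_k k x ^ (k - Suc 0)" using cb by simp
    then show ?thesis using le[of 0] k by linarith
  qed
qed

lemma FD: assumes k: "k \<ge> 1" and x: "x \<in> {0..1}"
  shows "f_k k x ^ k = (1 - x) * NN k x k"
proof -
  define F where "F = f_k k x"
  define D where "D = NN k x k"
  have rel: "F^k - F * F^k = x^k - x * x^k" using fk_rel[OF k x] unfolding F_def by simp
  have pd: "x^k - F^k = (x - F) * D"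
    unfolding D_def NN_def F_def power_diff_sumr2[of x k "f_k k x"] by (simp add: mult.commute)
  show ?thesis
  proof (cases "F = x")
    case False
    have "(x - F) * (F^k - (1 - x) * D) = 0"
    proof -
      have "(x - F) * (F^k - (1 - x) * D) = (x - F) * F^k - (1 - x) * ((x - F) * D)"
        by (simp add: algebra_simps)
      also have "\<dots> = (x - F) * F^k - (1 - x) * (x^k - F^k)" using pd by simp
      also have "\<dots> = (F^k - F * F^k) - (x^k - x * x^k)" by (simp add: algebra_simps)
      finally show ?thesis using rel by simp
    qed
    then show ?thesis using False unfolding F_def D_def by simp
  next
    case True
    then have xc: "x = cc k" using fk_fix[OF k x] unfolding F_def by simp
    have "D = (\<Sum>i<k. x^(k-1))"
      unfolding D_def NN_def using True unfolding F_def
      by (intro sum.cong refl) (auto simp: power_add[symmetric])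
    also have "\<dots> = real k * x^(k-1)" by simp
    finally have Dv: "D = real k * x^(k-1)" .
    have h: "(1 - x) * real k = x" using xc unfolding cc_def by (simp add: field_simps)
    have "(1 - x) * D = ((1 - x) * real k) * x^(k-1)" using Dv by simp
    also have "\<dots> = x * x^(k-1)" using h by simp
    also have "\<dots> = x^k" using k by (simp add: power_eq_if[of x k])
    finally show ?thesis using True unfolding F_def D_def by simp
  qed
qed

lemma NN_step: assumes k: "k \<ge> 1" and x: "x \<in> {0..1}" and m: "Suc m \<le> k"
  shows "f_k k x * NN k x (Suc m) = f_k k x ^ k + x * NN k x m"
  using m
proof (induction m)
  case 0
  then show ?case unfolding NN_def using k by (simp add: power_eq_if[of "f_k k x" k])
next
  case (Suc m)
  have e1: "f_k k x * f_k k x ^ (k - Suc (Suc m)) = f_k k x ^ (k - Suc m)"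
    using Suc.prems by (simp add: Suc_diff_Suc power_Suc[symmetric])
  have "f_k k x * NN k x (Suc (Suc m)) = f_k k x * NN k x (Suc m) + x^Suc m * (f_k k x * f_k k x ^ (k - Suc (Suc m)))"
    unfolding NN_def by (simp add: algebra_simps)
  also have "\<dots> = f_k k x ^ k + x * NN k x m + x^Suc m * f_k k x ^ (k - Suc m)"
    using Suc by (simp add: e1)
  also have "\<dots> = f_k k x ^ k + x * NN k x (Suc m)"
    unfolding NN_def by (simp add: algebra_simps sum_distrib_left)
  finally show ?case .
qed

lemma wt_0: "k \<ge> 1 \<Longrightarrow> x \<in> {0..1} \<Longrightarrow> wt k x 0 = 1"
  unfolding wt_def using NN_pos[of k x] by simp

lemma wt_k: "wt k x k = 0"
  unfolding wt_def NN_def by simp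

lemma wt_nonneg: "k \<ge> 1 \<Longrightarrow> x \<in> {0..1} \<Longrightarrow> 0 \<le> wt k x t"
  unfolding wt_def using NN_pos[of k x] NN_nonneg[of k x] by simp

lemma wt_eigen: assumes k: "k \<ge> 1" and x: "x \<in> {0..1}" and t: "t < k"
  shows "(1 - x) * wt k x 0 + x * wt k x (Suc t) = f_k k x * wt k x t"
proof -
  define D where "D = NN k x k"
  have D: "D > 0" using NN_pos[OF k x] unfolding D_def .
  have kt: "k - t = Suc (k - Suc t)" using t by simp
  have e: "f_k k x * NN k x (k - t) = (1 - x) * D + x * NN k x (k - Suc t)"
    using NN_step[OF k x, of "k - Suc t"] FD[OF k x] t kt unfolding D_def by simp
  have "(1 - x) * wt k x 0 + x * wt k x (Suc t) = (1 - x) + x * (NN k x (k - Suc t) / D)"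
    using NN_pos[OF k x] by (simp add: wt_def D_def)
  also have "\<dots> = ((1 - x) * D + x * NN k x (k - Suc t)) / D" using D by (simp add: field_simps)
  also have "\<dots> = (f_k k x * NN k x (k - t)) / D" using e by simp
  also have "\<dots> = f_k k x * wt k x t" unfolding wt_def D_def by simp
  finally show ?thesis .
qed

lemma wt_lower: assumes k: "k \<ge> 1" and x: "x \<in> {0..1}"
  shows "m \<le> k \<Longrightarrow> 1 - x^m \<le> wt k x (k - m)"
proof (induction m)
  case 0
  then show ?case using wt_k[of k x] by simp
next
  case (Suc m)
  have t: "k - Suc m < k" using Suc.prems by simp
  have s: "Suc (k - Suc m) = k - m" using Suc.prems by simp
  have e: "(1 - x) * 1 + x * wt k x (k - m) = f_k k x * wt k x (k - Suc m)"
    using wt_eigen[OF k x t] wt_0[OF k x] s by simp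
  have "f_k k x * wt k x (k - Suc m) \<le> wt k x (k - Suc m)"
    using fk_range[OF k x] wt_nonneg[OF k x, of "k - Suc m"] by (simp add: mult_left_le_one_le)
  moreover have "x * (1 - x^m) \<le> x * wt k x (k - m)"
    using Suc x by (intro mult_left_mono) auto
  ultimately show ?case using e by (simp add: algebra_simps)
qed

lemma term_ineq:
  fixes a A b B :: real
  assumes nn: "0 \<le> a" "0 \<le> A" "0 \<le> b" "0 \<le> B" and aB: "a * B \<le> b * A"
    and ij: "i < j" "j < k"
  shows "b^i * B^(k - Suc i) * (a^j * A^(k - Suc j)) \<le> a^i * A^(k - Suc i) * (b^j * B^(k - Suc j))"
proof -
  obtain d where j: "j = i + d" using ij by (metis less_imp_add_positive)
  have ki: "k - Suc i = (k - Suc j) + d" using ij j by simp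
  define e where "e = k - Suc j"
  define C where "C = a^i * b^i * A^e * B^e"
  have C: "0 \<le> C" unfolding C_def using nn by simp
  have "(a * B)^d \<le> (b * A)^d" using aB nn by (intro power_mono) auto
  then have "C * (a * B)^d \<le> C * (b * A)^d" using C by (rule mult_left_mono)
  moreover have "b^i * B^(k - Suc i) * (a^j * A^(k - Suc j)) = C * (a * B)^d"
    unfolding ki e_def[symmetric] C_def by (simp only: j power_add power_mult_distrib mult_ac)
  moreover have "a^i * A^(k - Suc i) * (b^j * B^(k - Suc j)) = C * (b * A)^d"
    unfolding ki e_def[symmetric] C_def by (simp only: j power_add power_mult_distrib mult_ac)
  ultimately show ?thesis by simp
qed

lemma wt_mono: assumes k: "k \<ge> 1" and x: "x \<in> {0..1}" and y: "y \<in> {0..1}" and xy: "x \<le> y"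
  and t: "t \<le> k"
  shows "wt k y t \<le> wt k x t"
proof -
  define m where "m = k - t"
  have m: "m \<le> k" unfolding m_def by simp
  define A where "A = f_k k x"
  define B where "B = f_k k y"
  have AB: "0 \<le> A" "0 \<le> B" "B \<le> A" using fk_range[OF k x] fk_range[OF k y] fk_anti[OF k x y xy]
    unfolding A_def B_def by auto
  have aB: "x * B \<le> y * A" using AB x y xy by (intro mult_mono) auto
  define R where "R = (\<lambda>(z::real) (Z::real). \<Sum>j\<in>{m..<k}. z^j * Z^(k - Suc j))"
  have split: "NN k z k = NN k z m + R z (f_k k z)" for z
    unfolding NN_def R_def using m
    by (simp add: lessThan_atLeast0 sum.atLeastLessThan_concat)
  have key: "NN k y m * R x A \<le> NN k x m * R y B"
  proof -
    have "NN k y m * R x A = (\<Sum>i<m. \<Sum>j\<in>{m..<k}. (y^i * B^(k - Suc i)) * (x^j * A^(k - Suc j)))"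
      unfolding NN_def R_def B_def by (simp add: sum_product)
    also have "\<dots> \<le> (\<Sum>i<m. \<Sum>j\<in>{m..<k}. (x^i * A^(k - Suc i)) * (y^j * B^(k - Suc j)))"
      using x y AB aB by (intro sum_mono term_ineq) auto
    also have "\<dots> = NN k x m * R y B"
      unfolding NN_def R_def A_def by (simp add: sum_product)
    finally show ?thesis .
  qed
  have Dx: "NN k x k > 0" and Dy: "NN k y k > 0" using NN_pos[OF k x] NN_pos[OF k y] by auto
  have "NN k y m * NN k x k \<le> NN k x m * NN k y k"
    using key split[of x] split[of y] unfolding A_def B_def by (simp add: algebra_simps)
  then show ?thesis unfolding wt_def m_def[symmetric] using Dx Dy
    by (simp add: divide_simps)
qed



fun tr :: "nat \<Rightarrow> nat set \<Rightarrow> nat" where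
  "tr 0 S = 0"
| "tr (Suc n) S = (if Suc n \<in> S then 0 else Suc (tr n S))"

fun gp :: "nat \<Rightarrow> nat \<Rightarrow> nat set \<Rightarrow> bool" where
  "gp k 0 S = False"
| "gp k (Suc n) S = (gp k n S \<or> k \<le> tr (Suc n) S)"

definition W :: "(nat \<Rightarrow> real) \<Rightarrow> nat \<Rightarrow> nat set \<Rightarrow> real" where
  "W u n S = (\<Prod>i\<in>{1..n}. if i \<in> S then u i else 1 - u i)"

definition Sig :: "nat \<Rightarrow> (nat \<Rightarrow> real) \<Rightarrow> nat \<Rightarrow> (nat \<Rightarrow> real) \<Rightarrow> real" where
  "Sig k u n \<phi> = (\<Sum>S\<in>Pow {1..n}. if gp k n S then 0 else W u n S * \<phi> (tr n S))"

lemma tr_insert: "m < a \<Longrightarrow> tr m (insert a S) = tr m S"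
  by (induction m) auto

lemma gp_insert: "m < a \<Longrightarrow> gp k m (insert a S) = gp k m S"
  by (induction m) (auto simp: tr_insert simp del: tr.simps)

lemma W_insert: "m < a \<Longrightarrow> W u m (insert a S) = W u m S"
  unfolding W_def by (intro prod.cong) auto

lemma notgp_tr: "k \<ge> 1 \<Longrightarrow> \<not> gp k n S \<Longrightarrow> tr n S < k"
  by (cases n) auto

lemma Sig_0: "Sig k u 0 \<phi> = \<phi> 0"
  unfolding Sig_def W_def by simp

lemma Sig_step:
  assumes k: "k \<ge> 1"
  shows "Sig k u (Suc n) \<phi> = Sig k u n (\<lambda>t. u (Suc n) * \<phi> 0 + (1 - u (Suc n)) * (if Suc t < k then \<phi> (Suc t) else 0))"
proof -
  let ?f = "\<lambda>S. if gp k (Suc n) S then 0 else W u (Suc n) S * \<phi> (tr (Suc n) S)"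
  have P: "Pow {1..Suc n} = Pow {1..n} \<union> insert (Suc n) ` Pow {1..n}"
    by (simp add: atLeastAtMostSuc_conv Pow_insert)
  have disj: "Pow {1..n} \<inter> insert (Suc n) ` Pow {1..n} = {}" by auto
  have inj: "inj_on (insert (Suc n)) (Pow {1..n})"
    by (rule inj_onI) (metis Pow_iff atLeastAtMost_iff insert_ident not_less_eq_eq subset_eq order_refl)
  have "Sig k u (Suc n) \<phi> = sum ?f (Pow {1..n} \<union> insert (Suc n) ` Pow {1..n})"
    unfolding Sig_def P ..
  also have "\<dots> = sum ?f (Pow {1..n}) + sum ?f (insert (Suc n) ` Pow {1..n})"
    by (rule sum.union_disjoint) (use disj in auto)
  also have "\<dots> = sum ?f (Pow {1..n}) + sum (?f \<circ> insert (Suc n)) (Pow {1..n})"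
    by (simp only: sum.reindex[OF inj])
  also have "\<dots> = (\<Sum>S\<in>Pow {1..n}. ?f S + (?f \<circ> insert (Suc n)) S)"
    by (simp add: sum.distrib)
  also have "\<dots> = (\<Sum>S\<in>Pow {1..n}. if gp k n S then 0 else W u n S *
      (u (Suc n) * \<phi> 0 + (1 - u (Suc n)) * (if Suc (tr n S) < k then \<phi> (Suc (tr n S)) else 0)))"
  proof (intro sum.cong refl)
    fix S assume S: "S \<in> Pow {1..n}"
    then have nS: "Suc n \<notin> S" by auto
    have W1: "W u (Suc n) S = (1 - u (Suc n)) * W u n S"
      unfolding W_def using nS by (simp add: atLeastAtMostSuc_conv)
    have W2: "W u (Suc n) (insert (Suc n) S) = u (Suc n) * W u n S"
      unfolding W_def using nS W_insert[of n "Suc n" u S]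
      by (simp add: atLeastAtMostSuc_conv W_def prod.insert)
    show "?f S + (?f \<circ> insert (Suc n)) S = (if gp k n S then 0 else W u n S *
      (u (Suc n) * \<phi> 0 + (1 - u (Suc n)) * (if Suc (tr n S) < k then \<phi> (Suc (tr n S)) else 0)))"
    proof -
      have t1: "tr (Suc n) S = Suc (tr n S)" using nS by simp
      have t2: "tr (Suc n) (insert (Suc n) S) = 0" by simp
      have g1: "gp k (Suc n) S = (gp k n S \<or> k \<le> Suc (tr n S))" using t1 by simp
      have g2: "gp k (Suc n) (insert (Suc n) S) = gp k n S"
        using gp_insert[of n "Suc n" k S] k by simp
      show ?thesis unfolding comp_def g1 g2 t1 t2 W1 W2
        by (cases "gp k n S"; cases "Suc (tr n S) < k") (simp_all add: algebra_simps)
    qed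
  qed
  finally show ?thesis unfolding Sig_def .
qed

lemma W_nonneg: "(\<And>i. i \<in> {1..n} \<Longrightarrow> 0 \<le> u i \<and> u i \<le> 1) \<Longrightarrow> 0 \<le> W u n S"
  unfolding W_def by (intro prod_nonneg) auto

lemma Sig_mono:
  assumes k: "k \<ge> 1" and u: "\<And>i. i \<in> {1..n} \<Longrightarrow> 0 \<le> u i \<and> u i \<le> 1"
    and le: "\<And>t. t < k \<Longrightarrow> \<phi> t \<le> \<psi> t"
  shows "Sig k u n \<phi> \<le> Sig k u n \<psi>"
  unfolding Sig_def
  using notgp_tr[OF k] W_nonneg[OF u] le by (intro sum_mono) (auto intro: mult_left_mono)

lemma Sig_cong:
  assumes k: "k \<ge> 1" and eq: "\<And>t. t < k \<Longrightarrow> \<phi> t = \<psi> t"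
  shows "Sig k u n \<phi> = Sig k u n \<psi>"
  unfolding Sig_def using notgp_tr[OF k] eq by (intro sum.cong) auto

lemma Sig_scale: "Sig k u n (\<lambda>t. c * \<phi> t) = c * Sig k u n \<phi>"
  unfolding Sig_def sum_distrib_left by (intro sum.cong refl) auto

lemma main_ineq:
  assumes k: "k \<ge> 1" and u: "\<And>i. i \<in> {1..n} \<Longrightarrow> 0 \<le> u i \<and> u i \<le> 1"
    and anti: "\<And>i j. 1 \<le> i \<Longrightarrow> i \<le> j \<Longrightarrow> j \<le> n \<Longrightarrow> u j \<le> u i"
  shows "m \<le> n \<Longrightarrow> x \<in> {0..1} \<Longrightarrow> (\<And>i. i \<in> {1..m} \<Longrightarrow> 1 - u i \<le> x) \<Longrightarrow>
     Sig k u m (wt k x) \<le> (\<Prod>i\<in>{1..m}. f_k k (1 - u i))"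
proof (induction m arbitrary: x)
  case 0
  then show ?case using wt_0[OF k] by (simp add: Sig_0)
next
  case (Suc m)
  define q where "q = 1 - u (Suc m)"
  have q: "q \<in> {0..1}" using u[of "Suc m"] Suc.prems unfolding q_def by auto
  have qx: "q \<le> x" using Suc.prems(3)[of "Suc m"] unfolding q_def by auto
  have um: "\<And>i. i \<in> {1..m} \<Longrightarrow> 0 \<le> u i \<and> u i \<le> 1" using u Suc.prems by auto
  have us: "\<And>i. i \<in> {1..Suc m} \<Longrightarrow> 0 \<le> u i \<and> u i \<le> 1" using u Suc.prems by auto
  have "Sig k u (Suc m) (wt k x) \<le> Sig k u (Suc m) (wt k q)"
    using wt_mono[OF k q Suc.prems(2) qx] us by (intro Sig_mono[OF k]) auto
  also have "\<dots> = Sig k u m (\<lambda>t. f_k k q * wt k q t)"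
    unfolding Sig_step[OF k]
  proof (rule Sig_cong[OF k])
    fix t assume t: "t < k"
    have "(if Suc t < k then wt k q (Suc t) else 0) = wt k q (Suc t)"
    proof (cases "Suc t < k")
      case False
      then have "Suc t = k" using t by simp
      then show ?thesis using wt_k[of k q] by simp
    qed simp
    then show "u (Suc m) * wt k q 0 + (1 - u (Suc m)) * (if Suc t < k then wt k q (Suc t) else 0) =
      f_k k q * wt k q t"
      using wt_eigen[OF k q t] unfolding q_def by simp
  qed
  also have "\<dots> = f_k k q * Sig k u m (wt k q)" by (rule Sig_scale)
  also have "\<dots> \<le> f_k k q * (\<Prod>i\<in>{1..m}. f_k k (1 - u i))"
  proof (rule mult_left_mono)
    show "Sig k u m (wt k q) \<le> (\<Prod>i\<in>{1..m}. f_k k (1 - u i))"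
    proof (rule Suc.IH)
      fix i assume "i \<in> {1..m}"
      then show "1 - u i \<le> q" using anti[of i "Suc m"] Suc.prems unfolding q_def by auto
    qed (use Suc.prems q in auto)
    show "0 \<le> f_k k q" using fk_range[OF k q] by auto
  qed
  also have "\<dots> = (\<Prod>i\<in>{1..Suc m}. f_k k (1 - u i))"
    unfolding q_def by (simp add: atLeastAtMostSuc_conv prod.insert)
  finally show ?case .
qed

definition Tm :: "nat \<Rightarrow> (nat \<Rightarrow> real) \<Rightarrow> nat \<Rightarrow> (nat \<Rightarrow> real) \<Rightarrow> nat \<Rightarrow> real" where
  "Tm k u j \<phi> = (\<lambda>t. u j * \<phi> 0 + (1 - u j) * (if Suc t < k then \<phi> (Suc t) else 0))"

fun G :: "nat \<Rightarrow> (nat \<Rightarrow> real) \<Rightarrow> nat \<Rightarrow> nat \<Rightarrow> (nat \<Rightarrow> real) \<Rightarrow> nat \<Rightarrow> real" where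
  "G k u j 0 \<phi> = \<phi>"
| "G k u j (Suc r) \<phi> = Tm k u (Suc j) (G k u (Suc j) r \<phi>)"

lemma Sig_G: "k \<ge> 1 \<Longrightarrow> Sig k u (j + r) \<phi> = Sig k u j (G k u j r \<phi>)"
proof (induction r arbitrary: j)
  case 0 then show ?case by simp
next
  case (Suc r)
  have "Sig k u (j + Suc r) \<phi> = Sig k u (Suc j + r) \<phi>" by simp
  also have "\<dots> = Sig k u (Suc j) (G k u (Suc j) r \<phi>)" by (rule Suc.IH[OF Suc.prems])
  also have "\<dots> = Sig k u j (Tm k u (Suc j) (G k u (Suc j) r \<phi>))"
    unfolding Tm_def by (rule Sig_step[OF Suc.prems])
  also have "\<dots> = Sig k u j (G k u j (Suc r) \<phi>)" by simp
  finally show ?case .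
qed

lemma G_bound:
  assumes k: "k \<ge> 1" and x: "0 \<le> x"
  shows "(\<And>i. i \<in> {Suc j..j + r} \<Longrightarrow> 0 \<le> u i \<and> u i \<le> 1 \<and> x \<le> 1 - u i) \<Longrightarrow> t < k \<Longrightarrow>
    G k u j r (\<lambda>_. 1) t \<le> 1 \<and> (k - t \<le> r \<longrightarrow> G k u j r (\<lambda>_. 1) t \<le> 1 - x^(k-t))"
proof (induction r arbitrary: j t)
  case 0
  then show ?case by simp
next
  case (Suc r)
  define \<phi> where "\<phi> = G k u (Suc j) r (\<lambda>_. 1)"
  have uj: "0 \<le> u (Suc j) \<and> u (Suc j) \<le> 1 \<and> x \<le> 1 - u (Suc j)" using Suc.prems(1)[of "Suc j"] by auto
  have hyp: "\<And>i. i \<in> {Suc (Suc j)..Suc j + r} \<Longrightarrow> 0 \<le> u i \<and> u i \<le> 1 \<and> x \<le> 1 - u i"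
    using Suc.prems(1) by auto
  have IH: "\<And>s. s < k \<Longrightarrow> \<phi> s \<le> 1 \<and> (k - s \<le> r \<longrightarrow> \<phi> s \<le> 1 - x^(k-s))"
    unfolding \<phi>_def using Suc.IH[OF hyp] by blast
  have G: "G k u j (Suc r) (\<lambda>_. 1) t = u (Suc j) * \<phi> 0 + (1 - u (Suc j)) * (if Suc t < k then \<phi> (Suc t) else 0)"
    by (simp add: Tm_def \<phi>_def)
  have p0: "\<phi> 0 \<le> 1" using IH[of 0] k by auto
  have a: "u (Suc j) * \<phi> 0 \<le> u (Suc j)" using p0 uj by (simp add: mult_left_le)
  have b: "(1 - u (Suc j)) * (if Suc t < k then \<phi> (Suc t) else 0) \<le> (1 - u (Suc j))"
    using IH[of "Suc t"] uj by (auto simp: mult_left_le)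
  have c1: "G k u j (Suc r) (\<lambda>_. 1) t \<le> 1" using G a b by linarith
  have c2: "G k u j (Suc r) (\<lambda>_. 1) t \<le> 1 - x^(k-t)" if kt: "k - t \<le> Suc r"
  proof (cases "Suc t < k")
    case True
    have "\<phi> (Suc t) \<le> 1 - x^(k - Suc t)" using IH[of "Suc t"] True kt by auto
    then have "(1 - u (Suc j)) * \<phi> (Suc t) \<le> (1 - u (Suc j)) * (1 - x^(k - Suc t))"
      using uj by (intro mult_left_mono) auto
    moreover have "x * x^(k - Suc t) \<le> (1 - u (Suc j)) * x^(k - Suc t)"
      using uj x by (intro mult_right_mono) auto
    moreover have "x^(k-t) = x * x^(k - Suc t)"
    proof -
      have "k - t = Suc (k - Suc t)" using True by simp
      then show ?thesis by simp
    qed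
    ultimately show ?thesis using G a True by (simp add: algebra_simps)
  next
    case False
    then have "k - t = 1" using Suc.prems(2) by simp
    then show ?thesis using G a False uj by simp
  qed
  show ?case using c1 c2 by blast
qed

theorem comb_main:
  assumes k: "k \<ge> 1" and nk: "k \<le> n" and u: "\<And>i. i \<in> {1..n} \<Longrightarrow> 0 \<le> u i \<and> u i \<le> 1"
    and anti: "\<And>i j. 1 \<le> i \<Longrightarrow> i \<le> j \<Longrightarrow> j \<le> n \<Longrightarrow> u j \<le> u i"
  shows "Sig k u n (\<lambda>_. 1) \<le> (\<Prod>i\<in>{1..n+1-k}. f_k k (1 - u i))"
proof -
  define N where "N = n + 1 - k"
  have N: "1 \<le> N" "N \<le> n" "n = N + (k - 1)" using k nk unfolding N_def by auto
  define x where "x = 1 - u N"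
  have x: "x \<in> {0..1}" using u[of N] N unfolding x_def by auto
  have "Sig k u n (\<lambda>_. 1) = Sig k u N (G k u N (k - 1) (\<lambda>_. 1))"
    using Sig_G[OF k, of u N "k - 1"] N by simp
  also have "\<dots> \<le> Sig k u N (wt k x)"
  proof (rule Sig_mono[OF k])
    show "\<And>i. i \<in> {1..N} \<Longrightarrow> 0 \<le> u i \<and> u i \<le> 1" using u N by auto
    fix t assume t: "t < k"
    have hyp: "\<And>i. i \<in> {Suc N..N + (k - 1)} \<Longrightarrow> 0 \<le> u i \<and> u i \<le> 1 \<and> x \<le> 1 - u i"
      using u anti[of N] N unfolding x_def by force
    have gb: "G k u N (k - 1) (\<lambda>_. 1) t \<le> 1 \<and> (k - t \<le> k - 1 \<longrightarrow> G k u N (k - 1) (\<lambda>_. 1) t \<le> 1 - x^(k-t))"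
      using G_bound[OF k, of x N "k - 1" u t] hyp x t by auto
    show "G k u N (k - 1) (\<lambda>_. 1) t \<le> wt k x t"
    proof (cases "t = 0")
      case True
      then show ?thesis using gb wt_0[OF k x] by simp
    next
      case False
      have "1 - x^(k-t) \<le> wt k x (k - (k - t))" using wt_lower[OF k x, of "k - t"] by simp
      moreover have "k - (k - t) = t" using t by simp
      moreover have "k - t \<le> k - 1" using False t by simp
      ultimately show ?thesis using gb by simp
    qed
  qed
  also have "\<dots> \<le> (\<Prod>i\<in>{1..N}. f_k k (1 - u i))"
    using main_ineq[OF k u anti, where m=N and x=x] N x anti[of _ N] unfolding x_def by auto
  finally show ?thesis unfolding N_def .
qed



lemma tr_char: "m \<le> tr n S \<longleftrightarrow> m \<le> n \<and> (\<forall>j. n < j + m \<longrightarrow> j \<le> n \<longrightarrow> j \<notin> S)"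
proof (induction n arbitrary: m)
  case 0 then show ?case by auto
next
  case (Suc n)
  show ?case
  proof (cases m)
    case 0 then show ?thesis by auto
  next
    case (Suc m')
    have "m \<le> tr (Suc n) S \<longleftrightarrow> Suc n \<notin> S \<and> m' \<le> tr n S" using Suc by auto
    also have "\<dots> \<longleftrightarrow> Suc n \<notin> S \<and> m' \<le> n \<and> (\<forall>j. n < j + m' \<longrightarrow> j \<le> n \<longrightarrow> j \<notin> S)"
      using Suc.IH by simp
    also have "\<dots> \<longleftrightarrow> m \<le> Suc n \<and> (\<forall>j. Suc n < j + m \<longrightarrow> j \<le> Suc n \<longrightarrow> j \<notin> S)"
    proof
      assume "Suc n \<notin> S \<and> m' \<le> n \<and> (\<forall>j. n < j + m' \<longrightarrow> j \<le> n \<longrightarrow> j \<notin> S)"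
      then show "m \<le> Suc n \<and> (\<forall>j. Suc n < j + m \<longrightarrow> j \<le> Suc n \<longrightarrow> j \<notin> S)"
        using Suc by (auto simp: le_Suc_eq)
    next
      assume R: "m \<le> Suc n \<and> (\<forall>j. Suc n < j + m \<longrightarrow> j \<le> Suc n \<longrightarrow> j \<notin> S)"
      then have a: "\<And>j. Suc n < j + m \<Longrightarrow> j \<le> Suc n \<Longrightarrow> j \<notin> S" by blast
      have "Suc n \<notin> S" using a[of "Suc n"] Suc by simp
      moreover have "\<forall>j. n < j + m' \<longrightarrow> j \<le> n \<longrightarrow> j \<notin> S" using a Suc by auto
      moreover have "m' \<le> n" using R Suc by simp
      ultimately show "Suc n \<notin> S \<and> m' \<le> n \<and> (\<forall>j. n < j + m' \<longrightarrow> j \<le> n \<longrightarrow> j \<notin> S)" by blast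
    qed
    finally show ?thesis .
  qed
qed

lemma gp_ex: "k \<ge> 1 \<Longrightarrow> gp k n S \<longleftrightarrow> (\<exists>e\<le>n. k \<le> tr e S)"
proof (induction n)
  case 0 then show ?case by simp
next
  case (Suc n)
  have "gp k (Suc n) S = (gp k n S \<or> k \<le> tr (Suc n) S)" by (simp only: gp.simps)
  then show ?case using Suc by (auto simp del: tr.simps gp.simps simp: le_Suc_eq)
qed

lemma gp_char: assumes k: "k \<ge> 1"
  shows "gp k n S \<longleftrightarrow> (\<exists>i. 1 \<le> i \<and> i + k - 1 \<le> n \<and> (\<forall>j\<in>{i..i+k-1}. j \<notin> S))"
proof
  assume "gp k n S"
  then obtain e where e: "e \<le> n" "k \<le> tr e S" using gp_ex[OF k] by blast
  then have e2: "k \<le> e" "\<forall>j. e < j + k \<longrightarrow> j \<le> e \<longrightarrow> j \<notin> S" using tr_char by auto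
  show "\<exists>i. 1 \<le> i \<and> i + k - 1 \<le> n \<and> (\<forall>j\<in>{i..i+k-1}. j \<notin> S)"
    by (rule exI[of _ "e + 1 - k"]) (use e e2 k in auto)
next
  assume "\<exists>i. 1 \<le> i \<and> i + k - 1 \<le> n \<and> (\<forall>j\<in>{i..i+k-1}. j \<notin> S)"
  then obtain i where i: "1 \<le> i" "i + k - 1 \<le> n" "\<forall>j\<in>{i..i+k-1}. j \<notin> S" by blast
  have "k \<le> tr (i + k - 1) S" unfolding tr_char using i k by auto
  then show "gp k n S" using gp_ex[OF k] i by blast
qed

theorem mainTheorem4:
  fixes M :: "'a measure" and A :: "nat \<Rightarrow> 'a set" and u :: "nat \<Rightarrow> real"
    and k n :: nat
  assumes "prob_space M"
    and "k \<ge> 1"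
    and "prob_space.indep_events M A {1..n}"
    and "\<And>i. i \<in> {1..n} \<Longrightarrow> measure M (A i) = u i"
    and "\<And>i. i \<in> {1..n} \<Longrightarrow> 0 \<le> u i \<and> u i \<le> 1"
    and "\<And>i j. 1 \<le> i \<Longrightarrow> i \<le> j \<Longrightarrow> j \<le> n \<Longrightarrow> u j \<le> u i"
  shows "measure M {\<omega> \<in> space M. \<not> has_k_gap k n A \<omega>}
           \<le> (\<Prod>i\<in>{1..n+1-k}. f_k k (1 - u i))"
proof -
  interpret P: prob_space M by fact
  note k = assms(2)
  show ?thesis
  proof (cases "n < k")
    case True
    then have "{1..n+1-k} = {}" by auto
    then show ?thesis by (simp add: P.prob_le_1)
  next
    case False
    then have nk: "k \<le> n" and n1: "1 \<le> n" using k by auto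
    define So where "So \<omega> = {i\<in>{1..n}. \<omega> \<in> A i}" for \<omega>
    define atom where "atom S = {\<omega> \<in> space M. So \<omega> = S}" for S
    define B where "B S i = (if i \<in> S then A i else space M - A i)" for S i
    have ev: "A i \<in> P.events" if "i \<in> {1..n}" for i
      using assms(3) that unfolding P.indep_events_def by auto
    have indS: "P.indep_sets (\<lambda>i. sigma_sets (space M) {A i}) {1..n}"
      using assms(3) unfolding P.indep_events_def_alt
      by (rule P.indep_sets_sigma) (auto simp: Int_stable_def)
    have atom_eq: "atom S = (\<Inter>i\<in>{1..n}. B S i)" if S: "S \<subseteq> {1..n}" for S
    proof
      show "atom S \<subseteq> (\<Inter>i\<in>{1..n}. B S i)"
        unfolding atom_def So_def B_def by auto
      show "(\<Inter>i\<in>{1..n}. B S i) \<subseteq> atom S"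
      proof
        fix \<omega> assume w: "\<omega> \<in> (\<Inter>i\<in>{1..n}. B S i)"
        have "\<omega> \<in> B S 1" using w n1 by auto
        then have sp: "\<omega> \<in> space M" using ev[of 1] n1 sets.sets_into_space[of "A 1" M]
          unfolding B_def by (auto split: if_splits)
        have wi: "\<And>i. i \<in> {1..n} \<Longrightarrow> \<omega> \<in> B S i" using w by blast
        have "So \<omega> = S"
        proof (rule set_eqI)
          fix i show "i \<in> So \<omega> \<longleftrightarrow> i \<in> S"
          proof (cases "i \<in> {1..n}")
            case True
            then show ?thesis using wi[OF True] unfolding So_def B_def by (auto split: if_splits)
          next
            case False
            then show ?thesis using S unfolding So_def by auto
          qed
        qed
        then show "\<omega> \<in> atom S" using sp unfolding atom_def by auto
      qed
    qed
    have Bev: "B S i \<in> P.events" if "i \<in> {1..n}" for S i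
      using ev[OF that] unfolding B_def by auto
    have atom_ev: "atom S \<in> P.events" if "S \<subseteq> {1..n}" for S
      unfolding atom_eq[OF that] using Bev n1 by (intro sets.finite_INT) auto
    have atom_meas: "measure M (atom S) = W u n S" if S: "S \<subseteq> {1..n}" for S
    proof -
      have "measure M (atom S) = (\<Prod>i\<in>{1..n}. measure M (B S i))"
        unfolding atom_eq[OF S]
      proof (rule P.indep_setsD[OF indS])
        show "\<forall>j\<in>{1..n}. B S j \<in> sigma_sets (space M) {A j}"
          unfolding B_def by (auto intro: sigma_sets.Basic sigma_sets.Compl)
      qed (use n1 in auto)
      also have "\<dots> = W u n S"
        unfolding W_def B_def using assms(4) ev by (intro prod.cong refl) (auto simp: P.prob_compl)
      finally show ?thesis .
    qed
    have gapeq: "has_k_gap k n A \<omega> \<longleftrightarrow> gp k n (So \<omega>)" for \<omega>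
      unfolding has_k_gap_def gp_char[OF k] So_def by auto
    let ?I = "{S\<in>Pow {1..n}. \<not> gp k n S}"
    have un: "{\<omega> \<in> space M. \<not> has_k_gap k n A \<omega>} = (\<Union>S\<in>?I. atom S)"
      unfolding atom_def gapeq by (auto simp: So_def)
    have "measure M {\<omega> \<in> space M. \<not> has_k_gap k n A \<omega>} = (\<Sum>S\<in>?I. measure M (atom S))"
      unfolding un using atom_ev
      by (intro P.finite_measure_finite_Union) (auto simp: disjoint_family_on_def atom_def)
    also have "\<dots> = (\<Sum>S\<in>?I. W u n S)" using atom_meas by (intro sum.cong) auto
    also have "\<dots> = (\<Sum>S\<in>Pow {1..n}. if \<not> gp k n S then W u n S else 0)"
      by (rule sum.inter_filter) simp
    also have "\<dots> = Sig k u n (\<lambda>_. 1)"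
      unfolding Sig_def by (intro sum.cong refl) auto
    also have "\<dots> \<le> (\<Prod>i\<in>{1..n+1-k}. f_k k (1 - u i))"
      by (rule comb_main[OF k nk assms(5) assms(6)])
    finally show ?thesis .
  qed
qed


end
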